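(* There does not exist a real linear map $\phi \colon M_2 \to \mathcal H_2$ such that $\phi(\mathcal U_2) \subset \mathcal H_2 \cap \mathcal U_2$.
   Context: $M_2$ is the set of $2\times 2$ complex matrices, $\mathcal U_2$ the unitary ones, and $\mathcal H_2$ the real vector space of $2\times2$ complex hermitian matrices. *)

theory Defs
  imports "HOL-Analysis.Analysis"
begin

definition conj_transpose :: "complex^2^2 \<Rightarrow> complex^2^2" where
  "conj_transpose A = (\<chi> i j. cnj (A $ j $ i))"

definition hermitian2 :: "complex^2^2 \<Rightarrow> bool" where
  "hermitian2 A \<longleftrightarrow> conj_transpose A = A"

definition unitary2 :: "complex^2^2 \<Rightarrow> bool" where
  "unitary2 U \<longleftrightarrow> U ** conj_transpose U = mat 1 \<and> conj_transpose U ** U = mat 1"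

end

theory Submission
  imports Defs
begin


lemma mm2: "((A::complex^2^2) ** B) $ i $ j = A$i$1 * B$1$j + A$i$2 * B$2$j"
  by (simp add: matrix_matrix_mult_def sum_2)

lemma sc2: "(c *\<^sub>R (M::complex^2^2)) $ i $ j = of_real c * M$i$j"
  by (metis vector_scaleR_component scaleR_conv_of_real)

lemma key:
  fixes A B :: "complex^2^2"
  assumes "A ** A = mat 1" "B ** B = mat 1"
    "((3/5) *\<^sub>R A + (4/5) *\<^sub>R B) ** ((3/5) *\<^sub>R A + (4/5) *\<^sub>R B) = mat 1"
  shows "A ** B + B ** A = 0"
proof -
  have "((3/5) *\<^sub>R A + (4/5) *\<^sub>R B) ** ((3/5) *\<^sub>R A + (4/5) *\<^sub>R B)
     = (9/25) *\<^sub>R (A ** A) + (16/25) *\<^sub>R (B ** B) + (12/25) *\<^sub>R (A ** B + B ** A)"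
    by (simp add: vec_eq_iff mm2 sc2 algebra_simps)
  with assms have "(12/25) *\<^sub>R (A ** B + B ** A) = mat 1 - (9/25) *\<^sub>R mat 1 - (16/25) *\<^sub>R mat 1"
    by (simp add: algebra_simps)
  also have "\<dots> = 0" by (simp add: vec_eq_iff sc2 mat_def, simp add: scaleR_conv_of_real)
  finally show ?thesis by simp
qed


definition M2 :: "complex \<Rightarrow> complex \<Rightarrow> complex \<Rightarrow> complex \<Rightarrow> complex^2^2" where
  "M2 a b c d = vector [vector [a,b], vector [c,d]]"

lemma M2_nth[simp]: "M2 a b c d $ 1 $ 1 = a" "M2 a b c d $ 1 $ 2 = b"
   "M2 a b c d $ 2 $ 1 = c" "M2 a b c d $ 2 $ 2 = d"
  by (simp_all add: M2_def)


lemma herm_ij: "hermitian2 A \<Longrightarrow> A$i$j = cnj (A$j$i)"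
proof -
  assume "hermitian2 A"
  then have "conj_transpose A $ i $ j = A $ i $ j" by (simp add: hermitian2_def)
  then show ?thesis by (simp add: conj_transpose_def)
qed

lemma real_of_cnj: "z = cnj z \<Longrightarrow> z = of_real (Re z)"
  by (simp add: complex_eq_iff)

lemma herm: "hermitian2 A \<Longrightarrow> A$2$1 = cnj (A$1$2) \<and> A$1$1 = of_real (Re (A$1$1)) \<and> A$2$2 = of_real (Re (A$2$2))"
  using herm_ij[of A] real_of_cnj by metis

lemma unitary_M2:
  assumes "a * cnj a + b * cnj b = 1" "c * cnj c + d * cnj d = 1" "a * cnj c + b * cnj d = 0"
   "cnj a * a + cnj c * c = 1" "cnj b * b + cnj d * d = 1" "cnj a * b + cnj c * d = 0"
  shows "unitary2 (M2 a b c d)"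
proof -
  have c1: "c * cnj a + d * cnj b = 0" "cnj b * a + cnj d * c = 0"
  proof -
    have "cnj (a * cnj c + b * cnj d) = 0" "cnj (cnj a * b + cnj c * d) = 0" using assms by simp_all
    then show "c * cnj a + d * cnj b = 0" "cnj b * a + cnj d * c = 0"
      by (simp_all add: mult.commute)
  qed
  have e: "conj_transpose (M2 a b c d) = M2 (cnj a) (cnj c) (cnj b) (cnj d)"
    by (simp add: conj_transpose_def vec_eq_iff forall_2)
  show ?thesis unfolding unitary2_def e
    using assms c1 by (simp add: vec_eq_iff forall_2 mm2 mat_def)
qed

lemma M2_comb: "r *\<^sub>R M2 a b c d + s *\<^sub>R M2 a' b' c' d' =
  M2 (of_real r * a + of_real s * a') (of_real r * b + of_real s * b') (of_real r * c + of_real s * c') (of_real r * d + of_real s * d')"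
  by (simp add: vec_eq_iff forall_2 sc2 del: vector_scaleR_component)

lemma u0: "unitary2 (M2 1 0 0 1)" by (rule unitary_M2) simp_all
lemma u1: "unitary2 (M2 0 \<i> \<i> 0)" by (rule unitary_M2) simp_all
lemma u2: "unitary2 (M2 0 1 (-1) 0)" by (rule unitary_M2) simp_all
lemma u3: "unitary2 (M2 \<i> 0 0 (-\<i>))" by (rule unitary_M2) simp_all

lemma u01: "unitary2 ((3/5) *\<^sub>R M2 1 0 0 1 + (4/5) *\<^sub>R M2 0 \<i> \<i> 0)"
  unfolding M2_comb by (rule unitary_M2) (simp_all add: complex_eq_iff)
lemma u02: "unitary2 ((3/5) *\<^sub>R M2 1 0 0 1 + (4/5) *\<^sub>R M2 0 1 (-1) 0)"
  unfolding M2_comb by (rule unitary_M2) (simp_all add: complex_eq_iff)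
lemma u03: "unitary2 ((3/5) *\<^sub>R M2 1 0 0 1 + (4/5) *\<^sub>R M2 \<i> 0 0 (-\<i>))"
  unfolding M2_comb by (rule unitary_M2) (simp_all add: complex_eq_iff)
lemma u12: "unitary2 ((3/5) *\<^sub>R M2 0 \<i> \<i> 0 + (4/5) *\<^sub>R M2 0 1 (-1) 0)"
  unfolding M2_comb by (rule unitary_M2) (simp_all add: complex_eq_iff)
lemma u13: "unitary2 ((3/5) *\<^sub>R M2 0 \<i> \<i> 0 + (4/5) *\<^sub>R M2 \<i> 0 0 (-\<i>))"
  unfolding M2_comb by (rule unitary_M2) (simp_all add: complex_eq_iff)
lemma u23: "unitary2 ((3/5) *\<^sub>R M2 0 1 (-1) 0 + (4/5) *\<^sub>R M2 \<i> 0 0 (-\<i>))"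
  unfolding M2_comb by (rule unitary_M2) (simp_all add: complex_eq_iff)


lemma ent: "(X::complex^2^2) = Y \<Longrightarrow> X$i$j = Y$i$j" by simp

lemma trace0:
  fixes A B :: "complex^2^2"
  assumes hA: "hermitian2 A" and hB: "hermitian2 B" and sA: "A ** A = mat 1" and sB: "B ** B = mat 1"
    and ac: "A ** B + B ** A = 0"
  shows "A$1$1 + A$2$2 = 0"
proof (rule ccontr)
  assume nz: "A$1$1 + A$2$2 \<noteq> 0"
  have a12: "A$1$1 * A$1$2 + A$1$2 * A$2$2 = 0" using ent[OF sA, of 1 2] by (simp add: mm2 mat_def)
  have a11: "A$1$1 * A$1$1 + A$1$2 * A$2$1 = 1" using ent[OF sA, of 1 1] by (simp add: mm2 mat_def)
  have a22: "A$2$1 * A$1$2 + A$2$2 * A$2$2 = 1" using ent[OF sA, of 2 2] by (simp add: mm2 mat_def)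
  have b11: "B$1$1 * B$1$1 + B$1$2 * B$2$1 = 1" using ent[OF sB, of 1 1] by (simp add: mm2 mat_def)
  have c11: "A$1$1 * B$1$1 + A$1$2 * B$2$1 + (B$1$1 * A$1$1 + B$1$2 * A$2$1) = 0"
    using ent[OF ac, of 1 1] by (simp add: mm2)
  have c12: "A$1$1 * B$1$2 + A$1$2 * B$2$2 + (B$1$1 * A$1$2 + B$1$2 * A$2$2) = 0"
    using ent[OF ac, of 1 2] by (simp add: mm2)
  have c21: "A$2$1 * B$1$1 + A$2$2 * B$2$1 + (B$2$1 * A$1$1 + B$2$2 * A$2$1) = 0"
    using ent[OF ac, of 2 1] by (simp add: mm2)
  have "A$1$2 * (A$1$1 + A$2$2) = 0" using a12 by (simp add: algebra_simps)
  then have b: "A$1$2 = 0" using nz by simp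
  have a21: "A$2$1 = 0" using herm_ij[OF hA, of 2 1] b by simp
  have "A$1$1 * A$1$1 = A$2$2 * A$2$2" using a11 a22 b a21 by simp
  then have "(A$1$1 - A$2$2) * (A$1$1 + A$2$2) = 0" by (simp add: algebra_simps)
  then have ad: "A$1$1 = A$2$2" using nz by simp
  have anz: "A$1$1 \<noteq> 0" using a11 b by (metis add.right_neutral mult_zero_left zero_neq_one)
  have "2 * A$1$1 * B$1$1 = 0" using c11 b a21 by (simp add: algebra_simps)
  then have B11: "B$1$1 = 0" using anz by simp
  have "(A$1$1 + A$2$2) * B$1$2 = 0" using c12 b by (simp add: algebra_simps)
  then have B12: "B$1$2 = 0" using nz by simp
  show False using b11 B11 B12 by simp
qed

definition v3 :: "complex^2^2 \<Rightarrow> real^3" where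
  "v3 A = vector [Re (A$1$1), Re (A$1$2), Im (A$1$2)]"

lemma inner3: "inner (vector [a,b,c] :: real^3) (vector [d,e,f]) = a*d+b*e+c*f"
  by (simp add: inner_vec_def sum_3)

lemma dot0:
  fixes A B :: "complex^2^2"
  assumes hA: "hermitian2 A" and hB: "hermitian2 B" and ac: "A ** B + B ** A = 0"
  shows "inner (v3 A) (v3 B) = 0"
proof -
  have c11: "A$1$1 * B$1$1 + A$1$2 * B$2$1 + (B$1$1 * A$1$1 + B$1$2 * A$2$1) = 0"
    using ent[OF ac, of 1 1] by (simp add: mm2)
  then have "Re (A$1$1 * B$1$1 + A$1$2 * B$2$1 + (B$1$1 * A$1$1 + B$1$2 * A$2$1)) = 0" by simp
  moreover have "A$2$1 = cnj (A$1$2)" "B$2$1 = cnj (B$1$2)" "Im (A$1$1) = 0" "Im (B$1$1) = 0"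
    using herm_ij[OF hA, of 2 1] herm_ij[OF hB, of 2 1] herm_ij[OF hA, of 1 1] herm_ij[OF hB, of 1 1]
    by (auto simp: complex_eq_iff)
  ultimately show ?thesis by (simp add: v3_def inner3 algebra_simps)
qed

lemma norm1:
  fixes A :: "complex^2^2"
  assumes hA: "hermitian2 A" and sA: "A ** A = mat 1"
  shows "inner (v3 A) (v3 A) = 1"
proof -
  have a11: "A$1$1 * A$1$1 + A$1$2 * A$2$1 = 1" using ent[OF sA, of 1 1] by (simp add: mm2 mat_def)
  then have "Re (A$1$1 * A$1$1 + A$1$2 * A$2$1) = 1" by simp
  moreover have "A$2$1 = cnj (A$1$2)" "Im (A$1$1) = 0"
    using herm_ij[OF hA, of 2 1] herm_ij[OF hA, of 1 1]
    by (auto simp: complex_eq_iff)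
  ultimately show ?thesis by (simp add: v3_def inner3 algebra_simps power2_eq_square)
qed

lemma four:
  fixes x y z w :: "real^3"
  assumes "inner x x = 1" "inner y y = 1" "inner z z = 1" "inner w w = 1"
    "inner x y = 0" "inner x z = 0" "inner x w = 0" "inner y z = 0" "inner y w = 0" "inner z w = 0"
  shows False
proof -
  let ?S = "{x,y,z,w}"
  have d: "x \<noteq> y" "x \<noteq> z" "x \<noteq> w" "y \<noteq> z" "y \<noteq> w" "z \<noteq> w" using assms by auto
  have "pairwise orthogonal ?S"
    using assms by (auto simp: pairwise_def orthogonal_def inner_commute)
  moreover have "0 \<notin> ?S" using assms by auto
  ultimately have "independent ?S" by (rule pairwise_orthogonal_independent)
  then have "card ?S \<le> 3" using independent_bound by fastforce
  moreover have "card ?S = 4" using d by simp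
  ultimately show False by simp
qed


lemma sq: "hermitian2 H \<Longrightarrow> unitary2 H \<Longrightarrow> H ** H = mat 1"
  by (simp add: hermitian2_def unitary2_def)

lemma lin2: "linear (f::complex^2^2 \<Rightarrow> complex^2^2) \<Longrightarrow> f (a *\<^sub>R x + b *\<^sub>R y) = a *\<^sub>R f x + b *\<^sub>R f y"
  by (simp add: linear_add linear_cmul)

lemma pair:
  fixes \<phi> :: "complex^2^2 \<Rightarrow> complex^2^2"
  assumes l: "linear \<phi>" and h: "\<forall>U. unitary2 U \<longrightarrow> hermitian2 (\<phi> U) \<and> unitary2 (\<phi> U)"
    and u: "unitary2 U" "unitary2 V" "unitary2 ((3/5) *\<^sub>R U + (4/5) *\<^sub>R V)"
  shows "\<phi> U ** \<phi> V + \<phi> V ** \<phi> U = 0"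
proof (rule key)
  show "\<phi> U ** \<phi> U = mat 1" using h u by (simp add: sq)
  show "\<phi> V ** \<phi> V = mat 1" using h u by (simp add: sq)
  have "\<phi> ((3/5) *\<^sub>R U + (4/5) *\<^sub>R V) ** \<phi> ((3/5) *\<^sub>R U + (4/5) *\<^sub>R V) = mat 1"
    using h u by (simp add: sq)
  then show "((3/5) *\<^sub>R \<phi> U + (4/5) *\<^sub>R \<phi> V) ** ((3/5) *\<^sub>R \<phi> U + (4/5) *\<^sub>R \<phi> V) = mat 1"
    by (simp add: lin2[OF l])
qed

theorem corollary3p6:
  shows "\<not> (\<exists>\<phi> :: complex^2^2 \<Rightarrow> complex^2^2.
            linear \<phi> \<and> (\<forall>A. hermitian2 (\<phi> A)) \<and>
            (\<forall>U. unitary2 U \<longrightarrow> hermitian2 (\<phi> U) \<and> unitary2 (\<phi> U)))"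
proof
  assume "\<exists>\<phi> :: complex^2^2 \<Rightarrow> complex^2^2.
            linear \<phi> \<and> (\<forall>A. hermitian2 (\<phi> A)) \<and>
            (\<forall>U. unitary2 U \<longrightarrow> hermitian2 (\<phi> U) \<and> unitary2 (\<phi> U))"
  then obtain \<phi> :: "complex^2^2 \<Rightarrow> complex^2^2" where l: "linear \<phi>"
    and h: "\<forall>U. unitary2 U \<longrightarrow> hermitian2 (\<phi> U) \<and> unitary2 (\<phi> U)" by blast
  define A0 where "A0 = \<phi> (M2 1 0 0 1)"
  define A1 where "A1 = \<phi> (M2 0 \<i> \<i> 0)"
  define A2 where "A2 = \<phi> (M2 0 1 (-1) 0)"
  define A3 where "A3 = \<phi> (M2 \<i> 0 0 (-\<i>))"
  have hs: "hermitian2 A0" "hermitian2 A1" "hermitian2 A2" "hermitian2 A3"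
    using h u0 u1 u2 u3 by (auto simp: A0_def A1_def A2_def A3_def)
  have n: "inner (v3 A0) (v3 A0) = 1" "inner (v3 A1) (v3 A1) = 1"
      "inner (v3 A2) (v3 A2) = 1" "inner (v3 A3) (v3 A3) = 1"
    using h u0 u1 u2 u3 by (auto simp: A0_def A1_def A2_def A3_def intro!: norm1 sq)
  have "A0 ** A1 + A1 ** A0 = 0" unfolding A0_def A1_def by (rule pair[OF l h u0 u1 u01])
  then have d01: "inner (v3 A0) (v3 A1) = 0" using hs by (intro dot0)
  have "A0 ** A2 + A2 ** A0 = 0" unfolding A0_def A2_def by (rule pair[OF l h u0 u2 u02])
  then have d02: "inner (v3 A0) (v3 A2) = 0" using hs by (intro dot0)
  have "A0 ** A3 + A3 ** A0 = 0" unfolding A0_def A3_def by (rule pair[OF l h u0 u3 u03])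
  then have d03: "inner (v3 A0) (v3 A3) = 0" using hs by (intro dot0)
  have "A1 ** A2 + A2 ** A1 = 0" unfolding A1_def A2_def by (rule pair[OF l h u1 u2 u12])
  then have d12: "inner (v3 A1) (v3 A2) = 0" using hs by (intro dot0)
  have "A1 ** A3 + A3 ** A1 = 0" unfolding A1_def A3_def by (rule pair[OF l h u1 u3 u13])
  then have d13: "inner (v3 A1) (v3 A3) = 0" using hs by (intro dot0)
  have "A2 ** A3 + A3 ** A2 = 0" unfolding A2_def A3_def by (rule pair[OF l h u2 u3 u23])
  then have d23: "inner (v3 A2) (v3 A3) = 0" using hs by (intro dot0)
  show False using four[OF n d01 d02 d03 d12 d13 d23] .
qed
end
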